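(* Consider the CoDGraD iteration described below, and assume that ${\bf A}_{\rm sde}$ has $1$ as a simple eigenvalue and all its other eigenvalues lie in the open unit complex disk, and that there is $M>0$ with $\|\nabla g_i({\bf x})\|_2\le M$ for all ${\bf x}\in\mathbb{R}^N$, $1\le i\le n$. Then there exists a positive constant $C_1$ such that for all $k\ge1$, $$\max_{1\le i\le n}\|{\bf x}_i(k)-\bar{\bf x}(k)\|_2\le C_1M\sum_{l=0}^{k-1}\Big(\tfrac{1+|\lambda_2({\bf A}_{\rm sde})|}{2}\Big)^{k-l}\alpha_l+C_1\Big(\tfrac{1+|\lambda_2({\bf A}_{\rm sde})|}{2}\Big)^{k}\max_{1\le i\le n}\|{\bf x}_i(0)-\bar{\bf x}(0)\|_2.$$
   Context: Setting: $f_1,\dots,f_m:\mathbb{R}^N\to\mathbb{R}$, $f=\sum_l f_l$; ${\bf B}=(b(i,l))$ real $n\times m$, ${\bf A}=(a(i,j))$ real $n\times n$ with ${\bf A}{\bf B}={\bf 1}_{n\times m}$; $g_i=\sum_l b(i,l)f_l$ differentiable. Let $t_+=\max(t,0)$, $w_i=\big(\sum_j|a(i,j)|\big)^{-1}$, $\tilde a(i,j)=w_ia(i,j)$, $\tilde{\bf A}_\pm=\big((\pm\tilde a(i,j))_+\big)$, ${\bf A}_{\rm sde}=\begin{pmatrix}\tilde{\bf A}_+&\tilde{\bf A}_-\\ \tilde{\bf A}_+&\tilde{\bf A}_-\end{pmatrix}$ (row stochastic, $2n\times2n$). CoDGraD iteration: positive step sizes $\alpha_k$, arbitrary ${\bf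 x}_i(0)\in\mathbb{R}^N$, and for $k\ge0$: ${\bf y}_i^\pm(k)={\bf x}_i(k)\mp\alpha_k\nabla g_i({\bf x}_i(k))$, ${\bf x}_i(k+1)=\sum_{j=1}^n w_i\{(a(i,j))_+{\bf y}_j^+(k)+(-a(i,j))_+{\bf y}_j^-(k)\}$. Under the spectral assumption, let ${\bf a}_{\rm sde}=(a_1,\dots,a_{2n})^T$ be the unique vector with ${\bf a}_{\rm sde}^T{\bf A}_{\rm sde}={\bf a}_{\rm sde}^T$ and $\sum_{i=1}^{2n}a_i=1$, and set $\bar{\bf x}(k)=\sum_{i=1}^n(a_i+a_{n+i}){\bf x}_i(k)$. The eigenvalues of ${\bf A}_{\rm sde}$ are ordered $1=\lambda_1>|\lambda_2({\bf A}_{\rm sde})|\ge\cdots\ge|\lambda_{2n}({\bf A}_{\rm sde})|$. *)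

theory Defs
  imports "HOL-Analysis.Analysis" "Jordan_Normal_Form.Char_Poly"
begin

text \<open>Matrices are rendered as functions nat => nat => real with explicit
  index bounds (indices start at 0).\<close>

definition pospart :: "real \<Rightarrow> real" where
  "pospart t = max t 0"

definition codgrad_w :: "nat \<Rightarrow> (nat \<Rightarrow> nat \<Rightarrow> real) \<Rightarrow> nat \<Rightarrow> real" where
  "codgrad_w n A i = inverse (\<Sum>j<n. \<bar>A i j\<bar>)"

text \<open>The 2n x 2n matrix A_sde = [[A+, A-],[A+, A-]] with entries
  (+- w_i a(i,j))_+ .\<close>
definition A_sde :: "nat \<Rightarrow> (nat \<Rightarrow> nat \<Rightarrow> real) \<Rightarrow> nat \<Rightarrow> nat \<Rightarrow> real" where
  "A_sde n A p q =
     (let i = p mod n in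
      if q < n then pospart (codgrad_w n A i * A i q)
      else pospart (- (codgrad_w n A i * A i (q - n))))"

definition A_sde_cmat :: "nat \<Rightarrow> (nat \<Rightarrow> nat \<Rightarrow> real) \<Rightarrow> complex mat" where
  "A_sde_cmat n A = Matrix.mat (2*n) (2*n) (\<lambda>(p,q). complex_of_real (A_sde n A p q))"

text \<open>Modulus of the second eigenvalue (in the ordering by modulus, counted
  with multiplicity): under the spectral assumption (1 is a simple eigenvalue),
  it equals the largest modulus of an eigenvalue different from 1.\<close>
definition abs_lambda2 :: "nat \<Rightarrow> (nat \<Rightarrow> nat \<Rightarrow> real) \<Rightarrow> real" where
  "abs_lambda2 n A = Max {cmod z | z. poly (char_poly (A_sde_cmat n A)) z = 0 \<and> z \<noteq> 1}"

end

theory Submission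
  imports Defs "Jordan_Normal_Form.Spectral_Radius" "Jordan_Normal_Form.Jordan_Normal_Form_Existence"
begin

fun mpow :: "nat \<Rightarrow> (nat \<Rightarrow> nat \<Rightarrow> real) \<Rightarrow> nat \<Rightarrow> nat \<Rightarrow> nat \<Rightarrow> real" where
  "mpow N G 0 p q = (if p = q then 1 else 0)"
| "mpow N G (Suc k) p q = (\<Sum>r<N. mpow N G k p r * G r q)"

lemma mpow_left:
  assumes "p < N" "q < N"
  shows "mpow N G (Suc k) p q = (\<Sum>r<N. G p r * mpow N G k r q)"
  using assms(2)
proof (induction k arbitrary: q)
  case 0
  have "mpow N G (Suc 0) p q = (\<Sum>r<N. if p = r then G r q else 0)"
    unfolding mpow.simps by (intro sum.cong) auto
  also have "\<dots> = G p q" using assms by simp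
  also have "\<dots> = (\<Sum>r<N. if r = q then G p r else 0)" using 0 by simp
  also have "\<dots> = (\<Sum>r<N. G p r * mpow N G 0 r q)" by (intro sum.cong) auto
  finally show ?case .
next
  case (Suc k)
  have "mpow N G (Suc (Suc k)) p q = (\<Sum>r<N. mpow N G (Suc k) p r * G r q)" by simp
  also have "\<dots> = (\<Sum>r<N. (\<Sum>s<N. G p s * mpow N G k s r) * G r q)"
    using Suc.IH by (intro sum.cong) auto
  also have "\<dots> = (\<Sum>r<N. \<Sum>s<N. G p s * (mpow N G k s r * G r q))"
    by (simp add: sum_distrib_right mult.assoc)
  also have "\<dots> = (\<Sum>s<N. \<Sum>r<N. G p s * (mpow N G k s r * G r q))"
    by (rule sum.swap)
  also have "\<dots> = (\<Sum>s<N. G p s * (\<Sum>r<N. mpow N G k s r * G r q))"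
    by (simp add: sum_distrib_left)
  also have "\<dots> = (\<Sum>s<N. G p s * mpow N G (Suc k) s q)" by simp
  finally show ?case .
qed

lemma mpow_scale: "mpow N (\<lambda>p q. c * G p q) k p q = c ^ k * mpow N G k p q"
  by (induction k arbitrary: q) (auto simp: sum_distrib_left algebra_simps)

definition cmat :: "nat \<Rightarrow> (nat \<Rightarrow> nat \<Rightarrow> real) \<Rightarrow> complex mat" where
  "cmat N G = Matrix.mat N N (\<lambda>(p,q). complex_of_real (G p q))"

lemma cmat_carrier[simp]: "cmat N G \<in> carrier_mat N N"
  by (simp add: cmat_def)

lemma cmat_dims[simp]: "dim_row (cmat N G) = N" "dim_col (cmat N G) = N"
  by (simp_all add: cmat_def)

lemma cmat_index[simp]: "p < N \<Longrightarrow> q < N \<Longrightarrow> cmat N G $$ (p,q) = complex_of_real (G p q)"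
  by (simp add: cmat_def)

lemma cmat_pow:
  assumes "p < N" "q < N"
  shows "(cmat N G ^\<^sub>m k) $$ (p,q) = complex_of_real (mpow N G k p q)"
  using assms(2)
proof (induction k arbitrary: q)
  case 0
  then show ?case using assms(1) by simp
next
  case (Suc k)
  have c: "cmat N G ^\<^sub>m k \<in> carrier_mat N N" by simp
  have "(cmat N G ^\<^sub>m Suc k) $$ (p,q) = (\<Sum>i\<in>{0..<N}. (cmat N G ^\<^sub>m k) $$ (p,i) * cmat N G $$ (i,q))"
    using Suc.prems assms(1) c by (simp add: scalar_prod_def)
  also have "\<dots> = (\<Sum>i\<in>{0..<N}. complex_of_real (mpow N G k p i * G i q))"
    using Suc.IH Suc.prems by (intro sum.cong) auto
  also have "\<dots> = complex_of_real (mpow N G (Suc k) p q)"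
    by (simp add: atLeast0LessThan)
  finally show ?case .
qed

lemma power_bound:
  fixes G :: "nat \<Rightarrow> nat \<Rightarrow> real"
  assumes rho: "\<rho> > 0" and N: "N > 0"
    and ev: "\<And>\<mu>. eigenvalue (cmat N G) \<mu> \<Longrightarrow> cmod \<mu> < \<rho>"
  shows "\<exists>K. \<forall>k p q. p < N \<longrightarrow> q < N \<longrightarrow> \<bar>mpow N G k p q\<bar> \<le> K * \<rho> ^ k"
proof -
  define H where "H = (\<lambda>p q. (1/\<rho>) * G p q)"
  have evH: "cmod \<mu> < 1" if "eigenvalue (cmat N H) \<mu>" for \<mu>
  proof -
    from that obtain v where v: "v \<in> carrier_vec N" "v \<noteq> 0\<^sub>v N" "cmat N H *\<^sub>v v = \<mu> \<cdot>\<^sub>v v"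
      unfolding eigenvalue_def eigenvector_def by auto
    have "cmat N G *\<^sub>v v = (complex_of_real \<rho> * \<mu>) \<cdot>\<^sub>v v"
    proof (rule eq_vecI)
      fix i assume i: "i < dim_vec ((complex_of_real \<rho> * \<mu>) \<cdot>\<^sub>v v)"
      hence i': "i < N" using v by auto
      have dv: "dim_vec v = N" using v by auto
      have ex: "(cmat N F *\<^sub>v v) $ i = (\<Sum>j\<in>{0..<N}. complex_of_real (F i j) * v $ j)" for F
        using i' dv by (simp add: scalar_prod_def)
      have "(cmat N H *\<^sub>v v) $ i = (\<mu> \<cdot>\<^sub>v v) $ i" using v by simp
      hence "(\<Sum>j\<in>{0..<N}. complex_of_real (H i j) * v $ j) = \<mu> * v $ i"
        using i' dv ex[of H] by simp
      hence "(\<Sum>j\<in>{0..<N}. complex_of_real (1/\<rho>) * (complex_of_real (G i j) * v $ j)) = \<mu> * v $ i"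
        unfolding H_def by (simp add: mult.assoc)
      hence "complex_of_real (1/\<rho>) * (\<Sum>j\<in>{0..<N}. complex_of_real (G i j) * v $ j) = \<mu> * v $ i"
        by (simp add: sum_distrib_left)
      hence S: "complex_of_real (1/\<rho>) * (\<Sum>j\<in>{0..<N}. complex_of_real (G i j) * v $ j) = \<mu> * v $ i" .
      have e: "complex_of_real \<rho> * complex_of_real (1/\<rho>) = 1" using rho by (simp flip: of_real_mult)
      have "(\<Sum>j\<in>{0..<N}. complex_of_real (G i j) * v $ j) = (complex_of_real \<rho> * complex_of_real (1/\<rho>)) * (\<Sum>j\<in>{0..<N}. complex_of_real (G i j) * v $ j)"
        unfolding e by (rule mult_1_left[symmetric])
      also have "\<dots> = complex_of_real \<rho> * (\<mu> * v $ i)" using S by (simp only: mult.assoc)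
      finally have "(\<Sum>j\<in>{0..<N}. complex_of_real (G i j) * v $ j) = complex_of_real \<rho> * \<mu> * v $ i"
        by (simp only: mult.assoc)
      then show "(cmat N G *\<^sub>v v) $ i = ((complex_of_real \<rho> * \<mu>) \<cdot>\<^sub>v v) $ i"
        using i' dv ex[of G] by simp
    next
      show "dim_vec (cmat N G *\<^sub>v v) = dim_vec ((complex_of_real \<rho> * \<mu>) \<cdot>\<^sub>v v)"
        using v(1) by simp
    qed
    hence "eigenvalue (cmat N G) (complex_of_real \<rho> * \<mu>)"
      unfolding eigenvalue_def eigenvector_def using v by auto
    from ev[OF this] have "\<rho> * cmod \<mu> < \<rho>" using rho by (simp add: norm_mult)
    thus ?thesis using rho by simp
  qed
  have sr: "spectral_radius (cmat N H) < 1"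
  proof -
    from spectral_radius_mem_max(1)[OF cmat_carrier N]
    obtain \<mu> where "\<mu> \<in> spectrum (cmat N H)" "spectral_radius (cmat N H) = norm \<mu>" by auto
    thus ?thesis using evH unfolding spectrum_def by auto
  qed
  from char_poly_factorized[OF cmat_carrier[of N H]] obtain as where
    "char_poly (cmat N H) = (\<Prod>a\<leftarrow>as. [:- a, 1:])" by auto
  from jordan_nf_exists[OF cmat_carrier this] have "\<exists>n_as. jordan_nf (cmat N H) n_as" .
  from spectral_radius_jnf_norm_bound_less_1[OF cmat_carrier sr this]
  obtain c where c: "\<forall>k. norm_bound (cmat N H ^\<^sub>m k) c" by auto
  show ?thesis
  proof (intro exI allI impI)
    fix k p q assume pq: "p < N" "q < N"
    from c have "norm ((cmat N H ^\<^sub>m k) $$ (p,q)) \<le> c" unfolding norm_bound_def using pq by auto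
    hence "\<bar>mpow N H k p q\<bar> \<le> c" using cmat_pow[OF pq] by simp
    hence "\<bar>(1/\<rho>)^k * mpow N G k p q\<bar> \<le> c" unfolding H_def mpow_scale .
    hence "(1/\<rho>)^k * \<bar>mpow N G k p q\<bar> \<le> c" using rho by (simp add: abs_mult)
    hence "\<rho>^k * ((1/\<rho>)^k * \<bar>mpow N G k p q\<bar>) \<le> \<rho>^k * c"
      using rho by (intro mult_left_mono) auto
    moreover have "\<rho>^k * ((1/\<rho>)^k * \<bar>mpow N G k p q\<bar>) = \<bar>mpow N G k p q\<bar>"
      using rho by (simp add: power_one_over)
    ultimately show "\<bar>mpow N G k p q\<bar> \<le> c * \<rho> ^ k" by (simp add: mult.commute)
  qed
qed


lemma mult_index_sum:
  assumes "dim_col A = n" "dim_row B = n" "i < dim_row A" "j < dim_col B"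
  shows "(A * B) $$ (i,j) = (\<Sum>r\<in>{0..<n}. A $$ (i,r) * B $$ (r,j))"
  using assms by (simp add: scalar_prod_def)

definition Smat :: "nat \<Rightarrow> complex mat" where
  "Smat N = Matrix.mat N N (\<lambda>(i,j). (if i = j then 1 else 0) - (if j = 0 \<and> i \<noteq> 0 then 1 else 0))"
definition Sinv :: "nat \<Rightarrow> complex mat" where
  "Sinv N = Matrix.mat N N (\<lambda>(i,j). (if i = j then 1 else 0) + (if j = 0 \<and> i \<noteq> 0 then 1 else 0))"

lemma Smat_carrier[simp]: "Smat N \<in> carrier_mat N N" and Sinv_carrier[simp]: "Sinv N \<in> carrier_mat N N"
  by (simp_all add: Smat_def Sinv_def)
lemma Smat_dims[simp]: "dim_row (Smat N) = N" "dim_col (Smat N) = N" "dim_row (Sinv N) = N" "dim_col (Sinv N) = N"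
  by (simp_all add: Smat_def Sinv_def)

lemma Smat_mult:
  assumes M: "dim_row M = N" and i: "i < N" and j: "j < dim_col M"
  shows "(Smat N * M) $$ (i,j) = M $$ (i,j) - (if i \<noteq> 0 then M $$ (0,j) else 0)"
proof -
  have N: "0 < N" using i by simp
  have "(Smat N * M) $$ (i,j) = (\<Sum>r\<in>{0..<N}. Smat N $$ (i,r) * M $$ (r,j))"
    using M i j by (intro mult_index_sum) auto
  also have "\<dots> = (\<Sum>r\<in>{0..<N}. (if r = i then M $$ (r,j) else 0) - (if r = 0 then (if i \<noteq> 0 then M $$ (0,j) else 0) else 0))"
    using i by (intro sum.cong) (auto simp: Smat_def)
  also have "\<dots> = M $$ (i,j) - (if i \<noteq> 0 then M $$ (0,j) else 0)"
    using i N by (simp add: sum_subtractf)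
  finally show ?thesis .
qed

lemma Sinv_mult:
  assumes M: "dim_row M = N" and i: "i < N" and j: "j < dim_col M"
  shows "(Sinv N * M) $$ (i,j) = M $$ (i,j) + (if i \<noteq> 0 then M $$ (0,j) else 0)"
proof -
  have N: "0 < N" using i by simp
  have "(Sinv N * M) $$ (i,j) = (\<Sum>r\<in>{0..<N}. Sinv N $$ (i,r) * M $$ (r,j))"
    using M i j by (intro mult_index_sum) auto
  also have "\<dots> = (\<Sum>r\<in>{0..<N}. (if r = i then M $$ (r,j) else 0) + (if r = 0 then (if i \<noteq> 0 then M $$ (0,j) else 0) else 0))"
    using i by (intro sum.cong) (auto simp: Sinv_def)
  also have "\<dots> = M $$ (i,j) + (if i \<noteq> 0 then M $$ (0,j) else 0)"
    using i N by (simp add: sum.distrib)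
  finally show ?thesis .
qed

lemma mult_Sinv_col0:
  assumes M: "dim_col M = N" and i: "i < dim_row M" and N: "0 < N"
  shows "(M * Sinv N) $$ (i,0) = (\<Sum>r\<in>{0..<N}. M $$ (i,r))"
proof -
  have "(M * Sinv N) $$ (i,0) = (\<Sum>r\<in>{0..<N}. M $$ (i,r) * Sinv N $$ (r,0))"
    using M i N by (intro mult_index_sum) auto
  also have "\<dots> = (\<Sum>r\<in>{0..<N}. M $$ (i,r))"
    by (intro sum.cong) (auto simp: Sinv_def)
  finally show ?thesis .
qed

lemma ST_one: "Smat N * Sinv N = 1\<^sub>m N"
proof (rule eq_matI)
  fix i j assume "i < dim_row (1\<^sub>m N :: complex mat)" "j < dim_col (1\<^sub>m N :: complex mat)"
  hence ij: "i < N" "j < N" by auto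
  have "(Smat N * Sinv N) $$ (i,j) = Sinv N $$ (i,j) - (if i \<noteq> 0 then Sinv N $$ (0,j) else 0)"
    using ij by (intro Smat_mult) auto
  thus "(Smat N * Sinv N) $$ (i,j) = (1\<^sub>m N :: complex mat) $$ (i,j)"
    using ij by (auto simp: Sinv_def)
qed auto

lemma TS_one: "Sinv N * Smat N = 1\<^sub>m N"
proof (rule eq_matI)
  fix i j assume "i < dim_row (1\<^sub>m N :: complex mat)" "j < dim_col (1\<^sub>m N :: complex mat)"
  hence ij: "i < N" "j < N" by auto
  have "(Sinv N * Smat N) $$ (i,j) = Smat N $$ (i,j) + (if i \<noteq> 0 then Smat N $$ (0,j) else 0)"
    using ij by (intro Sinv_mult) auto
  thus "(Sinv N * Smat N) $$ (i,j) = (1\<^sub>m N :: complex mat) $$ (i,j)"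
    using ij by (auto simp: Smat_def)
qed auto

lemma char_poly_1x1: "char_poly (Matrix.mat 1 1 (\<lambda>_. c)) = [:- c, 1:]"
proof -
  have "char_poly (Matrix.mat 1 1 (\<lambda>_. c)) = (\<Prod>a\<leftarrow>diag_mat (Matrix.mat 1 1 (\<lambda>_. c)). [:- a, 1:])"
    by (rule char_poly_upper_triangular[of _ 1]) (auto simp: upper_triangular_def)
  also have "diag_mat (Matrix.mat 1 1 (\<lambda>_. c)) = [c]" by (simp add: diag_mat_def)
  finally show ?thesis by simp
qed

lemma deflate:
  fixes Ac :: "complex mat" and a :: "nat \<Rightarrow> complex"
  assumes N: "N \<ge> 2" and Ac: "Ac \<in> carrier_mat N N"
    and rows: "\<And>i. i < N \<Longrightarrow> (\<Sum>j\<in>{0..<N}. Ac $$ (i,j)) = 1"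
    and asum: "(\<Sum>j\<in>{0..<N}. a j) = 1"
  shows "\<exists>D \<in> carrier_mat (N-1) (N-1). char_poly Ac = [:-1,1:] * char_poly D \<and>
           char_poly (Matrix.mat N N (\<lambda>(i,j). Ac $$ (i,j) - a j)) = [:0,1:] * char_poly D"
proof -
  define S where "S = Smat N"
  define T where "T = Sinv N"
  define Bc where "Bc = Matrix.mat N N (\<lambda>(i,j). Ac $$ (i,j) - a j)"
  define A' where "A' = S * Ac * T"
  define B' where "B' = S * Bc * T"
  have N0: "0 < N" using N by simp
  have S: "S \<in> carrier_mat N N" and T: "T \<in> carrier_mat N N" and Bc: "Bc \<in> carrier_mat N N"
    unfolding S_def T_def Bc_def by auto
  have A': "A' \<in> carrier_mat N N" and B': "B' \<in> carrier_mat N N"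
    unfolding A'_def B'_def using S T Ac Bc by auto
  have sim: "similar_mat X (S * X * T)" if X: "X \<in> carrier_mat N N" for X
  proof (rule similar_matI[of _ _ T S N])
    show "{X, S * X * T, T, S} \<subseteq> carrier_mat N N" using X S T by auto
    show "T * S = 1\<^sub>m N" unfolding S_def T_def by (rule TS_one)
    show "S * T = 1\<^sub>m N" unfolding S_def T_def by (rule ST_one)
    have "T * (S * X * T) * S = (T * S) * X * (T * S)"
      using X S T by (simp add: assoc_mult_mat[of _ N N _ N _ N])
    also have "\<dots> = X" using X unfolding S_def T_def TS_one by simp
    finally show "X = T * (S * X * T) * S" by simp
  qed
  have cpA: "char_poly Ac = char_poly A'" unfolding A'_def by (rule char_poly_similar[OF sim[OF Ac]])
  have cpB: "char_poly Bc = char_poly B'" unfolding B'_def by (rule char_poly_similar[OF sim[OF Bc]])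
  have SAc: "(S * Ac) $$ (i,r) = Ac $$ (i,r) - (if i \<noteq> 0 then Ac $$ (0,r) else 0)" if "i < N" "r < N" for i r
    unfolding S_def using that Ac by (intro Smat_mult) auto
  have SBc: "(S * Bc) $$ (i,r) = Bc $$ (i,r) - (if i \<noteq> 0 then Bc $$ (0,r) else 0)" if "i < N" "r < N" for i r
    unfolding S_def using that Bc by (intro Smat_mult) auto
  have A'0: "A' $$ (i,0) = (if i = 0 then 1 else 0)" if i: "i < N" for i
  proof -
    have "A' $$ (i,0) = (\<Sum>r\<in>{0..<N}. (S * Ac) $$ (i,r))"
      unfolding A'_def T_def using S Ac i N0 by (intro mult_Sinv_col0) auto
    also have "\<dots> = (\<Sum>r\<in>{0..<N}. Ac $$ (i,r) - (if i \<noteq> 0 then Ac $$ (0,r) else 0))"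
      using i by (intro sum.cong) (auto simp: SAc)
    also have "\<dots> = 1 - (if i \<noteq> 0 then 1 else 0)"
      using rows[OF i] rows[OF N0] by (simp add: sum_subtractf)
    finally show ?thesis by simp
  qed
  have Bc_rows: "(\<Sum>j\<in>{0..<N}. Bc $$ (i,j)) = 0" if i: "i < N" for i
  proof -
    have "(\<Sum>j\<in>{0..<N}. Bc $$ (i,j)) = (\<Sum>j\<in>{0..<N}. Ac $$ (i,j) - a j)"
      using i by (intro sum.cong) (auto simp: Bc_def)
    also have "\<dots> = 0" using rows[OF i] asum by (simp add: sum_subtractf)
    finally show ?thesis .
  qed
  have B'0: "B' $$ (i,0) = 0" if i: "i < N" for i
  proof -
    have "B' $$ (i,0) = (\<Sum>r\<in>{0..<N}. (S * Bc) $$ (i,r))"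
      unfolding B'_def T_def using S Bc i N0 by (intro mult_Sinv_col0) auto
    also have "\<dots> = (\<Sum>r\<in>{0..<N}. Bc $$ (i,r) - (if i \<noteq> 0 then Bc $$ (0,r) else 0))"
      using i by (intro sum.cong) (auto simp: SBc)
    also have "\<dots> = 0"
      using Bc_rows[OF i] Bc_rows[OF N0] by (cases "i = 0") (simp_all add: sum_subtractf)
    finally show ?thesis .
  qed
  have AB': "B' $$ (i,j) = A' $$ (i,j)" if i: "i < N" "i \<noteq> 0" and j: "j < N" for i j
  proof -
    have "B' $$ (i,j) = (\<Sum>r\<in>{0..<N}. (S * Bc) $$ (i,r) * T $$ (r,j))"
      unfolding B'_def using S Bc T i j by (intro mult_index_sum) auto
    also have "\<dots> = (\<Sum>r\<in>{0..<N}. (S * Ac) $$ (i,r) * T $$ (r,j))"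
    proof (intro sum.cong refl)
      fix r assume r: "r \<in> {0..<N}"
      have "(S * Bc) $$ (i,r) = Bc $$ (i,r) - Bc $$ (0,r)" using SBc[of i r] r i by simp
      also have "\<dots> = Ac $$ (i,r) - Ac $$ (0,r)" using r i N0 by (simp add: Bc_def)
      also have "\<dots> = (S * Ac) $$ (i,r)" using SAc[of i r] r i by simp
      finally show "(S * Bc) $$ (i,r) * T $$ (r,j) = (S * Ac) $$ (i,r) * T $$ (r,j)" by simp
    qed
    also have "\<dots> = A' $$ (i,j)"
      unfolding A'_def using S Ac T i j by (intro mult_index_sum[symmetric]) auto
    finally show ?thesis .
  qed
  define D where "D = Matrix.mat (N-1) (N-1) (\<lambda>(i,j). A' $$ (Suc i, Suc j))"
  have D: "D \<in> carrier_mat (N-1) (N-1)" unfolding D_def by auto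
  have NN: "1 + (N - 1) = N" using N by simp
  have A'blk: "A' = four_block_mat (Matrix.mat 1 1 (\<lambda>_. 1)) (Matrix.mat 1 (N-1) (\<lambda>(_,j). A' $$ (0, Suc j))) (0\<^sub>m (N-1) 1) D"
  proof (rule eq_matI)
    fix i j assume ij: "i < dim_row (four_block_mat (Matrix.mat 1 1 (\<lambda>_. 1)) (Matrix.mat 1 (N-1) (\<lambda>(_,j). A' $$ (0, Suc j))) (0\<^sub>m (N-1) 1) D)"
       "j < dim_col (four_block_mat (Matrix.mat 1 1 (\<lambda>_. 1)) (Matrix.mat 1 (N-1) (\<lambda>(_,j). A' $$ (0, Suc j))) (0\<^sub>m (N-1) 1) D)"
    hence ij': "i < N" "j < N" using D NN by auto
    show "A' $$ (i,j) = four_block_mat (Matrix.mat 1 1 (\<lambda>_. 1)) (Matrix.mat 1 (N-1) (\<lambda>(_,j). A' $$ (0, Suc j))) (0\<^sub>m (N-1) 1) D $$ (i,j)"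
      using ij ij' A'0 by (cases "i = 0"; cases "j = 0") (auto simp: D_def)
  qed (use A' D NN in auto)
  have B'blk: "B' = four_block_mat (Matrix.mat 1 1 (\<lambda>_. 0)) (Matrix.mat 1 (N-1) (\<lambda>(_,j). B' $$ (0, Suc j))) (0\<^sub>m (N-1) 1) D"
  proof (rule eq_matI)
    fix i j assume ij: "i < dim_row (four_block_mat (Matrix.mat 1 1 (\<lambda>_. 0)) (Matrix.mat 1 (N-1) (\<lambda>(_,j). B' $$ (0, Suc j))) (0\<^sub>m (N-1) 1) D)"
       "j < dim_col (four_block_mat (Matrix.mat 1 1 (\<lambda>_. 0)) (Matrix.mat 1 (N-1) (\<lambda>(_,j). B' $$ (0, Suc j))) (0\<^sub>m (N-1) 1) D)"
    hence ij': "i < N" "j < N" using D NN by auto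
    show "B' $$ (i,j) = four_block_mat (Matrix.mat 1 1 (\<lambda>_. 0)) (Matrix.mat 1 (N-1) (\<lambda>(_,j). B' $$ (0, Suc j))) (0\<^sub>m (N-1) 1) D $$ (i,j)"
      using ij ij' B'0 AB' A'0 by (cases "i = 0"; cases "j = 0") (auto simp: D_def)
  qed (use B' D NN in auto)
  have cbA: "char_poly (four_block_mat (Matrix.mat 1 1 (\<lambda>_. 1)) (Matrix.mat 1 (N-1) (\<lambda>(_,j). A' $$ (0, Suc j))) (0\<^sub>m (N-1) 1) D)
     = char_poly (Matrix.mat 1 1 (\<lambda>_. (1::complex))) * char_poly D"
    by (rule char_poly_four_block_zeros_col) (use D in auto)
  have cbB: "char_poly (four_block_mat (Matrix.mat 1 1 (\<lambda>_. 0)) (Matrix.mat 1 (N-1) (\<lambda>(_,j). B' $$ (0, Suc j))) (0\<^sub>m (N-1) 1) D)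
     = char_poly (Matrix.mat 1 1 (\<lambda>_. (0::complex))) * char_poly D"
    by (rule char_poly_four_block_zeros_col) (use D in auto)
  have "char_poly Ac = [:-1,1:] * char_poly D"
    using cbA unfolding cpA by (simp only: A'blk[symmetric] char_poly_1x1)
  moreover have "char_poly Bc = [:0,1:] * char_poly D"
    using cbB unfolding cpB by (simp only: B'blk[symmetric] char_poly_1x1 minus_zero)
  ultimately show ?thesis using D unfolding Bc_def by blast
qed


lemma sum_split2: "(\<Sum>q<2*(n::nat). f q) = (\<Sum>q<n. f q) + (\<Sum>q<n. f (n+q))"
proof -
  have "(\<Sum>q<n+k. f q) = (\<Sum>q<n. f q) + (\<Sum>q<k. f (n+q))" for k
    by (induction k) (auto simp: add.assoc)
  from this[of n] show ?thesis by (simp add: mult_2)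
qed

lemma pospart_scale: "c > 0 \<Longrightarrow> pospart (c * t) = c * pospart t"
  unfolding pospart_def by (auto simp: max_def mult_le_0_iff zero_le_mult_iff)

lemma pospart_scale_neg: "c > 0 \<Longrightarrow> pospart (- (c * t)) = c * pospart (- t)"
  using pospart_scale[of c "-t"] by simp

lemma pospart_abs: "pospart t + pospart (- t) = \<bar>t\<bar>"
  unfolding pospart_def by auto

lemma mpow0_sum:
  fixes v :: "nat \<Rightarrow> 'a::real_vector"
  assumes "p < N"
  shows "(\<Sum>q<N. mpow N G 0 p q *\<^sub>R v q) = v p"
proof -
  have "(\<Sum>q<N. mpow N G 0 p q *\<^sub>R v q) = (\<Sum>q<N. if p = q then v q else 0)"
    by (intro sum.cong) auto
  also have "\<dots> = v p" using assms by simp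
  finally show ?thesis .
qed

lemma mpow_step_sum:
  fixes v :: "nat \<Rightarrow> 'a::real_vector"
  assumes p: "p < N"
  shows "(\<Sum>q<N. G p q *\<^sub>R (\<Sum>r<N. mpow N G j q r *\<^sub>R v r)) = (\<Sum>r<N. mpow N G (Suc j) p r *\<^sub>R v r)"
proof -
  have "(\<Sum>q<N. G p q *\<^sub>R (\<Sum>r<N. mpow N G j q r *\<^sub>R v r)) = (\<Sum>q<N. \<Sum>r<N. (G p q * mpow N G j q r) *\<^sub>R v r)"
    by (simp add: scaleR_sum_right)
  also have "\<dots> = (\<Sum>r<N. \<Sum>q<N. (G p q * mpow N G j q r) *\<^sub>R v r)"
    by (rule sum.swap)
  also have "\<dots> = (\<Sum>r<N. (\<Sum>q<N. G p q * mpow N G j q r) *\<^sub>R v r)"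
    by (simp add: scaleR_sum_left)
  also have "\<dots> = (\<Sum>r<N. mpow N G (Suc j) p r *\<^sub>R v r)"
  proof (intro sum.cong refl)
    fix r assume "r \<in> {..<N}"
    then show "(\<Sum>q<N. G p q * mpow N G j q r) *\<^sub>R v r = mpow N G (Suc j) p r *\<^sub>R v r"
      using mpow_left[OF p, of r G j] by simp
  qed
  finally show ?thesis .
qed


theorem proposition4:
  fixes n m :: nat
    and f :: "nat \<Rightarrow> 'v::euclidean_space \<Rightarrow> real"
    and B A :: "nat \<Rightarrow> nat \<Rightarrow> real"
    and g :: "nat \<Rightarrow> 'v \<Rightarrow> real"
    and grad :: "nat \<Rightarrow> 'v \<Rightarrow> 'v"
    and alpha :: "nat \<Rightarrow> real"
    and x :: "nat \<Rightarrow> nat \<Rightarrow> 'v"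
    and asde :: "nat \<Rightarrow> real"
    and M :: real
  assumes n_pos: "n \<ge> 1" and m_pos: "m \<ge> 1"
    and AB: "\<forall>i<n. \<forall>l<m. (\<Sum>j<n. A i j * B j l) = 1"
    and g_def: "\<forall>i<n. \<forall>y. g i y = (\<Sum>l<m. B i l * f l y)"
    and g_grad: "\<forall>i<n. \<forall>y. (g i has_derivative (\<lambda>h. grad i y \<bullet> h)) (at y)"
    and alpha_pos: "\<forall>k. alpha k > 0"
    and iter: "\<forall>k. \<forall>i<n. x (Suc k) i =
        (\<Sum>j<n. codgrad_w n A i *\<^sub>R
           (pospart (A i j) *\<^sub>R (x k j - alpha k *\<^sub>R grad j (x k j))
            + pospart (- A i j) *\<^sub>R (x k j + alpha k *\<^sub>R grad j (x k j))))"
    and simple_one: "order 1 (char_poly (A_sde_cmat n A)) = 1"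
    and others_in_disk: "\<forall>z. poly (char_poly (A_sde_cmat n A)) z = 0 \<and> z \<noteq> 1 \<longrightarrow> cmod z < 1"
    and asde_left: "\<forall>q<2*n. (\<Sum>p<2*n. asde p * A_sde n A p q) = asde q"
    and asde_sum: "(\<Sum>p<2*n. asde p) = 1"
    and M_pos: "M > 0"
    and grad_bound: "\<forall>i<n. \<forall>y. norm (grad i y) \<le> M"
  shows "\<exists>C1>0. \<forall>k\<ge>1.
     let xbar = (\<lambda>k. \<Sum>i<n. (asde i + asde (n + i)) *\<^sub>R x k i);
         rho = (1 + abs_lambda2 n A) / 2
     in Max ((\<lambda>i. norm (x k i - xbar k)) ` {..<n})
        \<le> C1 * M * (\<Sum>l<k. rho ^ (k - l) * alpha l)
          + C1 * rho ^ k * Max ((\<lambda>i. norm (x 0 i - xbar 0)) ` {..<n})"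
proof -
  define N where "N = 2*n"
  define As where "As = A_sde n A"
  define w where "w = codgrad_w n A"
  define Bm where "Bm = (\<lambda>p q. As p q - asde q)"
  define X where "X = (\<lambda>k q. x k (q mod n))"
  define d where "d = (\<lambda>k q. if q < n then - grad q (x k q) else grad (q - n) (x k (q - n)))"
  define xb where "xb = (\<lambda>k. \<Sum>i<n. (asde i + asde (n + i)) *\<^sub>R x k i)"
  define z where "z = (\<lambda>k q. X k q - xb k)"
  define Ac where "Ac = A_sde_cmat n A"
  have n0: "0 < n" using n_pos by simp
  have N2: "N \<ge> 2" unfolding N_def using n_pos by simp
  have N0: "0 < N" using N2 by simp

  have rowA_pos: "(\<Sum>j<n. \<bar>A i j\<bar>) > 0" if i: "i < n" for i
  proof (rule ccontr)
    assume "\<not> (\<Sum>j<n. \<bar>A i j\<bar>) > 0"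
    hence "(\<Sum>j<n. \<bar>A i j\<bar>) = 0" by (metis sum_abs_ge_zero order_le_less)
    hence "\<forall>j\<in>{..<n}. \<bar>A i j\<bar> = 0" by (subst (asm) sum_nonneg_eq_0_iff) auto
    hence "(\<Sum>j<n. A i j * B j 0) = 0" by simp
    with AB i m_pos show False by auto
  qed
  have w_pos: "w i > 0" if "i < n" for i
    unfolding w_def codgrad_w_def using rowA_pos[OF that] by simp
  have w_mult: "w i * (\<Sum>j<n. \<bar>A i j\<bar>) = 1" if "i < n" for i
    unfolding w_def codgrad_w_def using rowA_pos[OF that] by simp

  have As_lo: "As p q = w (p mod n) * pospart (A (p mod n) q)" if "q < n" for p q
    unfolding As_def A_sde_def w_def Let_def using that w_pos[of "p mod n"] n0
    by (simp add: pospart_scale w_def)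
  have As_hi: "As p (n + q) = w (p mod n) * pospart (- A (p mod n) q)" for p q
    unfolding As_def A_sde_def w_def Let_def using w_pos[of "p mod n"] n0
    by (simp add: pospart_scale_neg w_def)
  have As_row: "(\<Sum>q<N. As p q) = 1" for p
  proof -
    let ?i = "p mod n"
    have i: "?i < n" using n0 by simp
    have "(\<Sum>q<N. As p q) = (\<Sum>q<n. w ?i * pospart (A ?i q)) + (\<Sum>q<n. w ?i * pospart (- A ?i q))"
      unfolding N_def sum_split2 by (simp add: As_lo As_hi)
    also have "\<dots> = w ?i * (\<Sum>q<n. \<bar>A ?i q\<bar>)"
      by (simp add: sum_distrib_left[symmetric] sum.distrib[symmetric] distrib_left[symmetric] pospart_abs)
    also have "\<dots> = 1" using w_mult[OF i] .
    finally show ?thesis .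
  qed
  have Bm_row: "(\<Sum>q<N. Bm p q) = 0" for p
    unfolding Bm_def using As_row[of p] asde_sum by (simp add: sum_subtractf N_def)

  have step: "X (Suc k) p = (\<Sum>q<N. As p q *\<^sub>R (X k q + alpha k *\<^sub>R d k q))" for k p
  proof -
    let ?i = "p mod n"
    have i: "?i < n" using n0 by simp
    have "(\<Sum>q<N. As p q *\<^sub>R (X k q + alpha k *\<^sub>R d k q))
        = (\<Sum>j<n. (w ?i * pospart (A ?i j)) *\<^sub>R (x k j - alpha k *\<^sub>R grad j (x k j)))
          + (\<Sum>j<n. (w ?i * pospart (- A ?i j)) *\<^sub>R (x k j + alpha k *\<^sub>R grad j (x k j)))"
      unfolding N_def sum_split2
      by (intro arg_cong2[where f="(+)"] sum.cong refl) (auto simp: As_lo As_hi X_def d_def)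
    also have "\<dots> = (\<Sum>j<n. w ?i *\<^sub>R (pospart (A ?i j) *\<^sub>R (x k j - alpha k *\<^sub>R grad j (x k j))
            + pospart (- A ?i j) *\<^sub>R (x k j + alpha k *\<^sub>R grad j (x k j))))"
      by (simp add: sum.distrib[symmetric] scaleR_add_right mult.assoc)
    also have "\<dots> = X (Suc k) p"
      unfolding X_def using iter i unfolding w_def by simp
    finally show ?thesis by simp
  qed
  have xb_eq: "xb k = (\<Sum>q<N. asde q *\<^sub>R X k q)" for k
    unfolding xb_def N_def sum_split2 X_def using n0
    by (simp add: scaleR_add_left sum.distrib)

  have zrec: "z (Suc k) p = (\<Sum>q<N. Bm p q *\<^sub>R z k q) + alpha k *\<^sub>R (\<Sum>q<N. Bm p q *\<^sub>R d k q)"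
    if p: "p < N" for k p
  proof -
    define Y where "Y = (\<lambda>q. X k q + alpha k *\<^sub>R d k q)"
    have "xb (Suc k) = (\<Sum>r<N. asde r *\<^sub>R (\<Sum>q<N. As r q *\<^sub>R Y q))"
      unfolding xb_eq Y_def using step by simp
    also have "\<dots> = (\<Sum>r<N. \<Sum>q<N. (asde r * As r q) *\<^sub>R Y q)"
      by (simp add: scaleR_sum_right)
    also have "\<dots> = (\<Sum>q<N. \<Sum>r<N. (asde r * As r q) *\<^sub>R Y q)"
      by (rule sum.swap)
    also have "\<dots> = (\<Sum>q<N. (\<Sum>r<N. asde r * As r q) *\<^sub>R Y q)"
      by (simp add: scaleR_sum_left)
    also have "\<dots> = (\<Sum>q<N. asde q *\<^sub>R Y q)"
      using asde_left unfolding As_def N_def by (intro sum.cong refl) auto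
    finally have xbS: "xb (Suc k) = (\<Sum>q<N. asde q *\<^sub>R Y q)" .
    have "z (Suc k) p = (\<Sum>q<N. As p q *\<^sub>R Y q) - (\<Sum>q<N. asde q *\<^sub>R Y q)"
      unfolding z_def xbS using step unfolding Y_def by simp
    also have "\<dots> = (\<Sum>q<N. Bm p q *\<^sub>R Y q)"
      unfolding Bm_def by (simp add: sum_subtractf scaleR_diff_left)
    also have "\<dots> = (\<Sum>q<N. Bm p q *\<^sub>R z k q + Bm p q *\<^sub>R xb k + alpha k *\<^sub>R (Bm p q *\<^sub>R d k q))"
      unfolding Y_def z_def by (intro sum.cong refl) (simp add: algebra_simps)
    also have "\<dots> = (\<Sum>q<N. Bm p q *\<^sub>R z k q) + (\<Sum>q<N. Bm p q) *\<^sub>R xb k + alpha k *\<^sub>R (\<Sum>q<N. Bm p q *\<^sub>R d k q)"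
      by (simp add: sum.distrib scaleR_sum_left scaleR_sum_right)
    also have "\<dots> = (\<Sum>q<N. Bm p q *\<^sub>R z k q) + alpha k *\<^sub>R (\<Sum>q<N. Bm p q *\<^sub>R d k q)"
      using Bm_row[of p] by simp
    finally show ?thesis .
  qed

  have unroll: "z k p = (\<Sum>q<N. mpow N Bm k p q *\<^sub>R z 0 q)
      + (\<Sum>l<k. alpha l *\<^sub>R (\<Sum>q<N. mpow N Bm (k - l) p q *\<^sub>R d l q))" if p: "p < N" for k p
    using p
  proof (induction k arbitrary: p)
    case 0
    then show ?case using mpow0_sum[OF 0, of Bm "z 0"] by simp
  next
    case (Suc k)
    define T1 where "T1 = (\<lambda>q. \<Sum>r<N. mpow N Bm k q r *\<^sub>R z 0 r)"
    define T2 where "T2 = (\<lambda>q. \<Sum>l<k. alpha l *\<^sub>R (\<Sum>r<N. mpow N Bm (k - l) q r *\<^sub>R d l r))"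
    have "(\<Sum>q<N. Bm p q *\<^sub>R z k q) = (\<Sum>q<N. Bm p q *\<^sub>R T1 q) + (\<Sum>q<N. Bm p q *\<^sub>R T2 q)"
      unfolding T1_def T2_def using Suc.IH
      by (simp add: sum.distrib[symmetric] scaleR_add_right[symmetric])
    also have "(\<Sum>q<N. Bm p q *\<^sub>R T1 q) = (\<Sum>r<N. mpow N Bm (Suc k) p r *\<^sub>R z 0 r)"
      unfolding T1_def by (rule mpow_step_sum[OF Suc.prems])
    also have "(\<Sum>q<N. Bm p q *\<^sub>R T2 q)
        = (\<Sum>l<k. alpha l *\<^sub>R (\<Sum>q<N. Bm p q *\<^sub>R (\<Sum>r<N. mpow N Bm (k - l) q r *\<^sub>R d l r)))"
      unfolding T2_def
      by (simp add: scaleR_sum_right sum.swap[of _ "{..<N}" "{..<k}"] scaleR_left_commute mult.left_commute)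
    also have "\<dots> = (\<Sum>l<k. alpha l *\<^sub>R (\<Sum>r<N. mpow N Bm (Suc k - l) p r *\<^sub>R d l r))"
    proof (intro sum.cong refl)
      fix l assume l: "l \<in> {..<k}"
      have "Suc k - l = Suc (k - l)" using l by auto
      then show "alpha l *\<^sub>R (\<Sum>q<N. Bm p q *\<^sub>R (\<Sum>r<N. mpow N Bm (k - l) q r *\<^sub>R d l r))
          = alpha l *\<^sub>R (\<Sum>r<N. mpow N Bm (Suc k - l) p r *\<^sub>R d l r)"
        using mpow_step_sum[OF Suc.prems, of Bm "k - l" "d l"] by simp
    qed
    finally have A1: "(\<Sum>q<N. Bm p q *\<^sub>R z k q) = (\<Sum>r<N. mpow N Bm (Suc k) p r *\<^sub>R z 0 r)
        + (\<Sum>l<k. alpha l *\<^sub>R (\<Sum>r<N. mpow N Bm (Suc k - l) p r *\<^sub>R d l r))" .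
    have "(\<Sum>r<N. mpow N Bm (Suc k - k) p r *\<^sub>R d k r) = (\<Sum>q<N. Bm p q *\<^sub>R (\<Sum>r<N. mpow N Bm 0 q r *\<^sub>R d k r))"
      using mpow_step_sum[OF Suc.prems, of Bm 0 "d k"] by simp
    also have "\<dots> = (\<Sum>q<N. Bm p q *\<^sub>R d k q)"
    proof (intro sum.cong refl)
      fix q assume "q \<in> {..<N}"
      then show "Bm p q *\<^sub>R (\<Sum>r<N. mpow N Bm 0 q r *\<^sub>R d k r) = Bm p q *\<^sub>R d k q"
        using mpow0_sum[of q N Bm "d k"] by simp
    qed
    finally have A2: "(\<Sum>q<N. Bm p q *\<^sub>R d k q) = (\<Sum>r<N. mpow N Bm (Suc k - k) p r *\<^sub>R d k r)" by simp
    show ?case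
      unfolding zrec[OF Suc.prems] A1 A2 by (simp add: add.assoc)
  qed

  have Ac_cmat: "Ac = cmat N As" unfolding Ac_def A_sde_cmat_def cmat_def N_def As_def ..
  have Ac_carrier: "Ac \<in> carrier_mat N N" unfolding Ac_cmat by simp
  have Ac_rows: "(\<Sum>j\<in>{0..<N}. Ac $$ (i,j)) = 1" if i: "i < N" for i
  proof -
    have "(\<Sum>j\<in>{0..<N}. Ac $$ (i,j)) = (\<Sum>j<N. complex_of_real (As i j))"
      unfolding Ac_cmat atLeast0LessThan using i by (intro sum.cong refl) auto
    also have "\<dots> = complex_of_real (\<Sum>j<N. As i j)" by simp
    finally show ?thesis using As_row[of i] by simp
  qed
  have asum: "(\<Sum>j\<in>{0..<N}. complex_of_real (asde j)) = 1"
    using asde_sum unfolding N_def atLeast0LessThan by (simp flip: of_real_sum)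
  from deflate[OF N2 Ac_carrier Ac_rows asum]
  obtain D where D: "D \<in> carrier_mat (N-1) (N-1)"
    and cpA: "char_poly Ac = [:-1,1:] * char_poly D"
    and cpB0: "char_poly (Matrix.mat N N (\<lambda>(i,j). Ac $$ (i,j) - complex_of_real (asde j))) = [:0,1:] * char_poly D"
    by blast
  have Bc_eq: "Matrix.mat N N (\<lambda>(i,j). Ac $$ (i,j) - complex_of_real (asde j)) = cmat N Bm"
    unfolding Ac_cmat by (rule eq_matI) (auto simp: cmat_def Bm_def)
  have cpB: "char_poly (cmat N Bm) = [:0,1:] * char_poly D" using cpB0 unfolding Bc_eq .
  have cpA_nz: "char_poly Ac \<noteq> 0"
    using degree_monic_char_poly[OF Ac_carrier] by auto
  have D1: "poly (char_poly D) 1 \<noteq> 0"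
  proof
    assume "poly (char_poly D) 1 = 0"
    hence "[:-1,1:] dvd char_poly D" by (simp add: poly_eq_0_iff_dvd)
    hence "[:-1,1:] ^ 2 dvd char_poly Ac" unfolding cpA power2_eq_square by (rule mult_dvd_mono[OF dvd_refl])
    from order_max[OF this cpA_nz] have "2 \<le> order 1 (char_poly Ac)" .
    with simple_one show False unfolding Ac_def by simp
  qed
  define R where "R = {cmod z |z. poly (char_poly Ac) z = 0 \<and> z \<noteq> 1}"
  have R_fin: "finite R"
  proof -
    have "R \<subseteq> cmod ` {z. poly (char_poly Ac) z = 0}" unfolding R_def by auto
    moreover have "finite {z. poly (char_poly Ac) z = 0}" by (rule poly_roots_finite[OF cpA_nz])
    ultimately show ?thesis by (meson finite_imageI finite_subset)
  qed
  have R_ne: "R \<noteq> {}"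
  proof -
    have "N - 1 > 0" using N2 by simp
    from spectrum_non_empty[OF D this] obtain z where "z \<in> spectrum D" by auto
    hence "poly (char_poly D) z = 0" unfolding spectrum_def using eigenvalue_root_char_poly[OF D] by auto
    moreover have "z \<noteq> 1" using D1 calculation by auto
    ultimately have "cmod z \<in> R" unfolding R_def cpA by (auto simp: poly_mult)
    thus ?thesis by auto
  qed
  define lam2 where "lam2 = abs_lambda2 n A"
  have lam2R: "lam2 = Max R" unfolding lam2_def abs_lambda2_def R_def Ac_def ..
  have lam2_in: "lam2 \<in> R" unfolding lam2R using R_fin R_ne by (rule Max_in)
  have lam2_lt1: "lam2 < 1" using lam2_in others_in_disk unfolding R_def Ac_def by auto
  have lam2_ge0: "lam2 \<ge> 0" using lam2_in unfolding R_def by auto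
  define rho where "rho = (1 + lam2) / 2"
  have rho_pos: "rho > 0" unfolding rho_def using lam2_ge0 by simp
  have R_lt: "r < rho" if "r \<in> R" for r
  proof -
    have "r \<le> lam2" unfolding lam2R using R_fin that by (rule Max_ge)
    thus ?thesis unfolding rho_def using lam2_lt1 by simp
  qed
  have eigB: "cmod \<mu> < rho" if "eigenvalue (cmat N Bm) \<mu>" for \<mu>
  proof -
    have "poly (char_poly (cmat N Bm)) \<mu> = 0"
      using that eigenvalue_root_char_poly[OF cmat_carrier] by auto
    hence "\<mu> * poly (char_poly D) \<mu> = 0" unfolding cpB by (simp add: poly_mult)
    hence "\<mu> = 0 \<or> poly (char_poly D) \<mu> = 0" by simp
    thus ?thesis
    proof
      assume "\<mu> = 0" thus ?thesis using rho_pos by simp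
    next
      assume h: "poly (char_poly D) \<mu> = 0"
      hence "\<mu> \<noteq> 1" using D1 by auto
      moreover have "poly (char_poly Ac) \<mu> = 0" unfolding cpA using h by (simp add: poly_mult)
      ultimately have "cmod \<mu> \<in> R" unfolding R_def by auto
      thus ?thesis by (rule R_lt)
    qed
  qed
  from power_bound[OF rho_pos N0 eigB]
  obtain K where K: "\<And>k p q. p < N \<Longrightarrow> q < N \<Longrightarrow> \<bar>mpow N Bm k p q\<bar> \<le> K * rho ^ k" by blast
  define K' where "K' = \<bar>K\<bar>"
  have K': "\<bar>mpow N Bm k p q\<bar> \<le> K' * rho ^ k" if "p < N" "q < N" for k p q
  proof -
    have "K * rho ^ k \<le> K' * rho ^ k" unfolding K'_def using rho_pos by (intro mult_right_mono) auto
    thus ?thesis using K[OF that, of k] by linarith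
  qed
  have K'0: "K' \<ge> 0" unfolding K'_def by simp
  define C1 where "C1 = real N * K' + 1"
  have NK: "real N * K' \<ge> 0" using K'0 by simp
  have C1_pos: "C1 > 0" unfolding C1_def using NK by linarith

  define Z0 where "Z0 = Max ((\<lambda>i. norm (x 0 i - xb 0)) ` {..<n})"
  have fin_ne: "finite ((\<lambda>i. norm (x k i - xb k)) ` {..<n})" "(\<lambda>i. norm (x k i - xb k)) ` {..<n} \<noteq> {}" for k
    using n0 by auto
  have z0_le: "norm (z 0 q) \<le> Z0" for q
  proof -
    have "q mod n < n" using n0 by simp
    hence "norm (x 0 (q mod n) - xb 0) \<in> (\<lambda>i. norm (x 0 i - xb 0)) ` {..<n}" by auto
    hence "norm (x 0 (q mod n) - xb 0) \<le> Z0" unfolding Z0_def using fin_ne(1) by (rule Max_ge[rotated])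
    thus ?thesis unfolding z_def X_def .
  qed
  have Z0_ge: "Z0 \<ge> 0" using z0_le[of 0] norm_ge_zero order_trans by blast
  have d_le: "norm (d l q) \<le> M" if "q < N" for l q
    using that grad_bound unfolding d_def N_def by auto
  have bound: "norm (z k p) \<le> C1 * M * (\<Sum>l<k. rho ^ (k - l) * alpha l) + C1 * rho ^ k * Z0"
    if p: "p < N" for k p
  proof -
    have S1: "norm (\<Sum>q<N. mpow N Bm k p q *\<^sub>R z 0 q) \<le> real N * K' * rho ^ k * Z0"
    proof -
      have "norm (\<Sum>q<N. mpow N Bm k p q *\<^sub>R z 0 q) \<le> (\<Sum>q<N. norm (mpow N Bm k p q *\<^sub>R z 0 q))"
        by (rule norm_sum)
      also have "\<dots> \<le> (\<Sum>q<N. K' * rho ^ k * Z0)"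
      proof (rule sum_mono)
        fix q assume q: "q \<in> {..<N}"
        have "norm (mpow N Bm k p q *\<^sub>R z 0 q) = \<bar>mpow N Bm k p q\<bar> * norm (z 0 q)" by simp
        also have "\<dots> \<le> (K' * rho ^ k) * Z0"
          using K'[OF p, of q k] q z0_le[of q] K'0 rho_pos by (intro mult_mono) auto
        finally show "norm (mpow N Bm k p q *\<^sub>R z 0 q) \<le> K' * rho ^ k * Z0" .
      qed
      also have "\<dots> = real N * K' * rho ^ k * Z0" by simp
      finally show ?thesis .
    qed
    have S2: "norm (\<Sum>l<k. alpha l *\<^sub>R (\<Sum>q<N. mpow N Bm (k - l) p q *\<^sub>R d l q))
        \<le> real N * K' * M * (\<Sum>l<k. rho ^ (k - l) * alpha l)"
    proof -
      have "norm (\<Sum>l<k. alpha l *\<^sub>R (\<Sum>q<N. mpow N Bm (k - l) p q *\<^sub>R d l q))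
          \<le> (\<Sum>l<k. norm (alpha l *\<^sub>R (\<Sum>q<N. mpow N Bm (k - l) p q *\<^sub>R d l q)))"
        by (rule norm_sum)
      also have "\<dots> \<le> (\<Sum>l<k. real N * K' * M * (rho ^ (k - l) * alpha l))"
      proof (rule sum_mono)
        fix l assume l: "l \<in> {..<k}"
        have "norm (\<Sum>q<N. mpow N Bm (k - l) p q *\<^sub>R d l q) \<le> (\<Sum>q<N. norm (mpow N Bm (k - l) p q *\<^sub>R d l q))"
          by (rule norm_sum)
        also have "\<dots> \<le> (\<Sum>q<N. K' * rho ^ (k - l) * M)"
        proof (rule sum_mono)
          fix q assume q: "q \<in> {..<N}"
          have "norm (mpow N Bm (k - l) p q *\<^sub>R d l q) = \<bar>mpow N Bm (k - l) p q\<bar> * norm (d l q)" by simp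
          also have "\<dots> \<le> (K' * rho ^ (k - l)) * M"
            using K'[OF p, of q "k - l"] q d_le[of q l] K'0 rho_pos by (intro mult_mono) auto
          finally show "norm (mpow N Bm (k - l) p q *\<^sub>R d l q) \<le> K' * rho ^ (k - l) * M" .
        qed
        also have "\<dots> = real N * K' * rho ^ (k - l) * M" by simp
        finally have h: "norm (\<Sum>q<N. mpow N Bm (k - l) p q *\<^sub>R d l q) \<le> real N * K' * rho ^ (k - l) * M" .
        have "norm (alpha l *\<^sub>R (\<Sum>q<N. mpow N Bm (k - l) p q *\<^sub>R d l q))
            = alpha l * norm (\<Sum>q<N. mpow N Bm (k - l) p q *\<^sub>R d l q)"
          using alpha_pos by (simp add: abs_of_pos)
        also have "\<dots> \<le> alpha l * (real N * K' * rho ^ (k - l) * M)"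
          using h alpha_pos by (intro mult_left_mono) (auto simp: less_imp_le)
        finally show "norm (alpha l *\<^sub>R (\<Sum>q<N. mpow N Bm (k - l) p q *\<^sub>R d l q))
            \<le> real N * K' * M * (rho ^ (k - l) * alpha l)" by (simp add: algebra_simps)
      qed
      also have "\<dots> = real N * K' * M * (\<Sum>l<k. rho ^ (k - l) * alpha l)"
        by (simp add: sum_distrib_left)
      finally show ?thesis .
    qed
    have Sge: "(\<Sum>l<k. rho ^ (k - l) * alpha l) \<ge> 0"
      using rho_pos alpha_pos by (intro sum_nonneg) (auto simp: less_imp_le)
    have "norm (z k p) \<le> real N * K' * rho ^ k * Z0 + real N * K' * M * (\<Sum>l<k. rho ^ (k - l) * alpha l)"
      unfolding unroll[OF p, of k] using S1 S2 norm_triangle_le by (smt (verit))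
    also have "\<dots> \<le> C1 * rho ^ k * Z0 + C1 * M * (\<Sum>l<k. rho ^ (k - l) * alpha l)"
    proof (rule add_mono)
      show "real N * K' * rho ^ k * Z0 \<le> C1 * rho ^ k * Z0"
        unfolding C1_def using rho_pos Z0_ge by (intro mult_right_mono) auto
      show "real N * K' * M * (\<Sum>l<k. rho ^ (k - l) * alpha l) \<le> C1 * M * (\<Sum>l<k. rho ^ (k - l) * alpha l)"
        unfolding C1_def using M_pos Sge by (intro mult_right_mono) auto
    qed
    finally show ?thesis by simp
  qed
  have main: "Max ((\<lambda>i. norm (x k i - xb k)) ` {..<n})
      \<le> C1 * M * (\<Sum>l<k. rho ^ (k - l) * alpha l) + C1 * rho ^ k * Z0" for k
  proof (rule Max.boundedI[OF fin_ne])
    fix a assume "a \<in> (\<lambda>i. norm (x k i - xb k)) ` {..<n}"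
    then obtain i where i: "i < n" and a: "a = norm (x k i - xb k)" by auto
    have "i < N" using i unfolding N_def by simp
    moreover have "z k i = x k i - xb k" unfolding z_def X_def using i by simp
    ultimately show "a \<le> C1 * M * (\<Sum>l<k. rho ^ (k - l) * alpha l) + C1 * rho ^ k * Z0"
      using bound[of i k] a by simp
  qed
  show ?thesis
    using C1_pos main unfolding Let_def Z0_def rho_def lam2_def xb_def by blast
qed

end
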